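(* Let $\mathcal X=\{\vec x^{(1)},\dots,\vec x^{(M)}\}\subset\mathbb{R}^d$. Let $U\subseteq\mathcal P([d])$, for each $\vec w\in U$ let $\mathcal I_{\vec w}$ be a finite set of frequency vectors $\vec\omega\in\mathbb{R}^d$ with $\operatorname{supp}\vec\omega=\vec w$, and let $a^\#_{\vec\omega}\in\mathbb{C}$ be coefficients. Fix $\vec u\in U$ such that no $\vec v\in U$ satisfies $\vec u\subsetneq\vec v$, and set $g(\vec x_{\vec u})=\sum_{\vec\omega\in\mathcal I_{\vec u}}a^\#_{\vec\omega}\mathrm{e}^{\mathrm{i}\langle\vec\omega_{\vec u},\vec x_{\vec u}\rangle}$. Define Monte-Carlo ANOVA terms of $g$ recursively by $$g^{\mathrm{MC}}_\varnothing=\frac1M\sum_{j=1}^M g(\vec x^{(j)}_{\vec u}),\qquad g^{\mathrm{MC}}_{\vec v}(\vec x_{\vec v})=\frac1M\sum_{j=1}^M g\big(\vec x_{\vec v},\vec x^{(j)}_{\vec u\setminus\vec v}\big)-\sum_{\vec v'\subsetneq\vec v}g^{\mathrm{MC}}_{\vec v'}(\vec x_{\vec v'})\quad(\varnothing\neq\vec v\subseteq\vec u).$$ Then $g^{\mathrm{MC}}_\varnothing=\frac1M\sum_{\vec\omega\in\mathcal I_{\vec u}}a^\#_{\vec\omega}\sum_{j=1}^M\mathrm{e}^{\mathrm{i}\langle\vec x^{(j)},\vec\omega\rangle}$ and, for every $\vec v\subseteq\vec u$, $$g^{\mathrm{MC}}_{\vec v}(\vec x_{\vec v})=\frac1M\sum_{\vec\omega\in\mathcal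 I_{\vec u}}a^\#_{\vec\omega}\sum_{j=1}^M\mathrm{e}^{\mathrm{i}\langle\vec x^{(j)}_{\vec u\setminus\vec v},\vec\omega_{\vec u\setminus\vec v}\rangle}\prod_{i\in\vec v}\left(\mathrm{e}^{\mathrm{i}x_i\omega_i}-\mathrm{e}^{\mathrm{i}x^{(j)}_i\omega_i}\right).$$
   Context: $[d]=\{1,\dots,d\}$, $\mathcal P([d])$ its power set, $\vec x_{\vec v}=(x_i)_{i\in\vec v}$; $g(\vec x_{\vec v},\vec x^{(j)}_{\vec u\setminus\vec v})$ means $g$ evaluated at the point whose coordinates in $\vec v$ are those of $\vec x$ and whose coordinates in $\vec u\setminus\vec v$ are those of $\vec x^{(j)}$. *)

theory Defs
  imports "HOL-Analysis.Analysis"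
begin

definition mixpt :: "'d set \<Rightarrow> real^'d \<Rightarrow> real^'d \<Rightarrow> real^'d" where
  "mixpt v x y = (\<chi> i. if i \<in> v then x $ i else y $ i)"

function anova_mc :: "(real^'d::finite \<Rightarrow> complex) \<Rightarrow> nat \<Rightarrow> (nat \<Rightarrow> real^'d) \<Rightarrow> 'd set \<Rightarrow> real^'d \<Rightarrow> complex" where
  "anova_mc g M X v x =
     (1 / of_nat M) * (\<Sum>j=1..M. g (mixpt v x (X j)))
     - (\<Sum>v'\<in>{v'. v' \<subset> v}. anova_mc g M X v' x)"
  by pat_completeness auto
termination
  by (relation "Wellfounded.measure (\<lambda>(g, M, X, v, x). card v)")
     (auto intro: psubset_card_mono)

end

theory Submission
  imports Defs
begin

lemma expi_sum:
  assumes "finite S"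
  shows "exp (\<i> * complex_of_real (\<Sum>i\<in>S. f i)) = (\<Prod>i\<in>S. exp (\<i> * complex_of_real (f i)))"
  using assms by (simp add: sum_distrib_left exp_sum)

lemma key_prod:
  fixes A B :: "'a \<Rightarrow> complex"
  assumes "finite u" "v \<subseteq> u"
  shows "(\<Sum>w\<in>Pow v. (\<Prod>i\<in>u-w. B i) * (\<Prod>i\<in>w. A i - B i)) = (\<Prod>i\<in>u-v. B i) * (\<Prod>i\<in>v. A i)"
proof -
  have fv: "finite v" using assms finite_subset by blast
  have "(\<Prod>i\<in>v. A i) = (\<Prod>i\<in>v. (A i - B i) + B i)" by simp
  also have "\<dots> = (\<Sum>w\<in>Pow v. (\<Prod>i\<in>w. A i - B i) * (\<Prod>i\<in>v-w. B i))"
    by (rule prod_add[OF fv])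
  finally have e: "(\<Prod>i\<in>v. A i) = (\<Sum>w\<in>Pow v. (\<Prod>i\<in>w. A i - B i) * (\<Prod>i\<in>v-w. B i))" .
  have s: "(\<Prod>i\<in>u-w. B i) = (\<Prod>i\<in>u-v. B i) * (\<Prod>i\<in>v-w. B i)" if "w \<in> Pow v" for w
  proof -
    have fv: "finite v" using assms finite_subset by blast
    have "u - w = (u - v) \<union> (v - w)" using that assms by auto
    moreover have "finite (u - v)" "finite (v - w)" "(u - v) \<inter> (v - w) = {}"
      using assms fv by auto
    ultimately show ?thesis by (simp add: prod.union_disjoint)
  qed
  show ?thesis
    unfolding e sum_distrib_left
  proof (rule sum.cong[OF refl])
    fix w assume "w \<in> Pow v"
    then show "(\<Prod>i\<in>u-w. B i) * (\<Prod>i\<in>w. A i - B i) =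
      (\<Prod>i\<in>u-v. B i) * ((\<Prod>i\<in>w. A i - B i) * (\<Prod>i\<in>v-w. B i))"
      by (simp only: s mult_ac)
  qed
qed

declare anova_mc.simps[simp del]

theorem lemma5p1:
  fixes M :: nat
    and X :: "nat \<Rightarrow> real^'d::finite"
    and U :: "'d set set"
    and I :: "'d set \<Rightarrow> (real^'d) set"
    and a :: "real^'d \<Rightarrow> complex"
    and u :: "'d set"
    and g :: "real^'d \<Rightarrow> complex"
  assumes M_pos: "M \<ge> 1"
    and I_finite: "\<forall>w\<in>U. finite (I w)"
    and I_supp: "\<forall>w\<in>U. \<forall>\<omega>\<in>I w. {i. \<omega> $ i \<noteq> 0} = w"
    and u_in: "u \<in> U"
    and u_max: "\<not> (\<exists>v\<in>U. u \<subset> v)"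
    and g_def: "g = (\<lambda>y. \<Sum>\<omega>\<in>I u. a \<omega> * exp (\<i> * complex_of_real (\<Sum>i\<in>u. \<omega> $ i * y $ i)))"
  shows "anova_mc g M X {} x0 =
           (1 / of_nat M) * (\<Sum>\<omega>\<in>I u. a \<omega> *
              (\<Sum>j=1..M. exp (\<i> * complex_of_real (X j \<bullet> \<omega>)))) \<and>
         (\<forall>v. v \<subseteq> u \<longrightarrow> (\<forall>x. anova_mc g M X v x =
           (1 / of_nat M) * (\<Sum>\<omega>\<in>I u. a \<omega> *
              (\<Sum>j=1..M. exp (\<i> * complex_of_real (\<Sum>i\<in>u - v. X j $ i * \<omega> $ i)) *
                 (\<Prod>i\<in>v. exp (\<i> * complex_of_real (x $ i * \<omega> $ i))
                          - exp (\<i> * complex_of_real (X j $ i * \<omega> $ i)))))))"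
proof -
  define G where "G v x = (1 / of_nat M) * (\<Sum>\<omega>\<in>I u. a \<omega> *
              (\<Sum>j=1..M. exp (\<i> * complex_of_real (\<Sum>i\<in>u - v. X j $ i * \<omega> $ i)) *
                 (\<Prod>i\<in>v. exp (\<i> * complex_of_real (x $ i * \<omega> $ i))
                          - exp (\<i> * complex_of_real (X j $ i * \<omega> $ i)))))" for v x
  have gmix: "g (mixpt v x (X j)) = (\<Sum>\<omega>\<in>I u. a \<omega> *
      ((\<Prod>i\<in>u-v. exp (\<i> * complex_of_real (X j $ i * \<omega> $ i))) *
       (\<Prod>i\<in>v. exp (\<i> * complex_of_real (x $ i * \<omega> $ i)))))" if "v \<subseteq> u" for v x j
  proof -
    have "exp (\<i> * complex_of_real (\<Sum>i\<in>u. \<omega> $ i * mixpt v x (X j) $ i)) =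
      (\<Prod>i\<in>u-v. exp (\<i> * complex_of_real (X j $ i * \<omega> $ i))) *
       (\<Prod>i\<in>v. exp (\<i> * complex_of_real (x $ i * \<omega> $ i)))" for \<omega>
    proof -
      have "exp (\<i> * complex_of_real (\<Sum>i\<in>u. \<omega> $ i * mixpt v x (X j) $ i)) =
         (\<Prod>i\<in>u. exp (\<i> * complex_of_real (\<omega> $ i * mixpt v x (X j) $ i)))"
        by (rule expi_sum) simp
      also have "\<dots> = (\<Prod>i\<in>u-v. exp (\<i> * complex_of_real (\<omega> $ i * mixpt v x (X j) $ i))) *
          (\<Prod>i\<in>v. exp (\<i> * complex_of_real (\<omega> $ i * mixpt v x (X j) $ i)))"
        by (rule prod.subset_diff[OF that finite])
      also have "\<dots> = (\<Prod>i\<in>u-v. exp (\<i> * complex_of_real (X j $ i * \<omega> $ i))) *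
       (\<Prod>i\<in>v. exp (\<i> * complex_of_real (x $ i * \<omega> $ i)))"
      proof (intro arg_cong2[where f="(*)"] prod.cong refl)
        fix i assume "i \<in> u - v"
        then show "exp (\<i> * complex_of_real (\<omega> $ i * mixpt v x (X j) $ i)) = exp (\<i> * complex_of_real (X j $ i * \<omega> $ i))"
          by (simp add: mixpt_def mult.commute)
      next
        fix i assume "i \<in> v"
        then show "exp (\<i> * complex_of_real (\<omega> $ i * mixpt v x (X j) $ i)) = exp (\<i> * complex_of_real (x $ i * \<omega> $ i))"
          by (simp add: mixpt_def mult.commute)
      qed
      finally show ?thesis .
    qed
    then show ?thesis unfolding g_def by (intro sum.cong refl) simp
  qed
  have sumG: "(\<Sum>w\<in>Pow v. G w x) = (1 / of_nat M) * (\<Sum>j=1..M. g (mixpt v x (X j)))"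
    if "v \<subseteq> u" for v x
  proof -
    have "(\<Sum>w\<in>Pow v. G w x) = (1 / of_nat M) * (\<Sum>\<omega>\<in>I u. a \<omega> *
              (\<Sum>j=1..M. (\<Sum>w\<in>Pow v. exp (\<i> * complex_of_real (\<Sum>i\<in>u - w. X j $ i * \<omega> $ i)) *
                 (\<Prod>i\<in>w. exp (\<i> * complex_of_real (x $ i * \<omega> $ i))
                          - exp (\<i> * complex_of_real (X j $ i * \<omega> $ i))))))"
      unfolding G_def sum_distrib_left[symmetric]
      by (simp add: sum_distrib_left sum.swap[of _ "Pow v"])
    also have "\<dots> = (1 / of_nat M) * (\<Sum>\<omega>\<in>I u. a \<omega> *
              (\<Sum>j=1..M. (\<Prod>i\<in>u-v. exp (\<i> * complex_of_real (X j $ i * \<omega> $ i))) *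
       (\<Prod>i\<in>v. exp (\<i> * complex_of_real (x $ i * \<omega> $ i)))))"
    proof -
      have "(\<Sum>w\<in>Pow v. exp (\<i> * complex_of_real (\<Sum>i\<in>u - w. X j $ i * \<omega> $ i)) *
                 (\<Prod>i\<in>w. exp (\<i> * complex_of_real (x $ i * \<omega> $ i))
                          - exp (\<i> * complex_of_real (X j $ i * \<omega> $ i)))) =
         (\<Prod>i\<in>u-v. exp (\<i> * complex_of_real (X j $ i * \<omega> $ i))) *
       (\<Prod>i\<in>v. exp (\<i> * complex_of_real (x $ i * \<omega> $ i)))" for j \<omega>
        using key_prod[OF finite that, of "\<lambda>i. exp (\<i> * complex_of_real (X j $ i * \<omega> $ i))"
            "\<lambda>i. exp (\<i> * complex_of_real (x $ i * \<omega> $ i))"]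
        by (simp only: expi_sum[OF finite])
      then show ?thesis by simp
    qed
    also have "\<dots> = (1 / of_nat M) * (\<Sum>j=1..M. g (mixpt v x (X j)))"
      unfolding gmix[OF that] sum_distrib_left by (rule sum.swap)
    finally show ?thesis .
  qed
  have main: "v \<subseteq> u \<longrightarrow> (\<forall>x. anova_mc g M X v x = G v x)" for v
    using finite[of v]
  proof (induction v rule: finite_psubset_induct)
    case (psubset v)
    show ?case
    proof (intro impI allI)
      fix x assume vu: "v \<subseteq> u"
      have IH: "anova_mc g M X v' x = G v' x" if "v' \<in> {v'. v' \<subset> v}" for v'
        using psubset.IH[of v'] that vu by auto
      have P: "Pow v = insert v {v'. v' \<subset> v}" by auto
      have "anova_mc g M X v x = (1 / of_nat M) * (\<Sum>j=1..M. g (mixpt v x (X j)))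
          - (\<Sum>v'\<in>{v'. v' \<subset> v}. anova_mc g M X v' x)"
        by (rule anova_mc.simps)
      also have "\<dots> = (\<Sum>w\<in>Pow v. G w x) - (\<Sum>v'\<in>{v'. v' \<subset> v}. G v' x)"
        using IH sumG[OF vu] by simp
      also have "\<dots> = G v x"
        unfolding P by (subst sum.insert) auto
      finally show "anova_mc g M X v x = G v x" .
    qed
  qed
  have part2: "\<forall>v. v \<subseteq> u \<longrightarrow> (\<forall>x. anova_mc g M X v x = G v x)" using main by blast
  have part1: "anova_mc g M X {} x0 =
           (1 / of_nat M) * (\<Sum>\<omega>\<in>I u. a \<omega> *
              (\<Sum>j=1..M. exp (\<i> * complex_of_real (X j \<bullet> \<omega>))))"
  proof -
    have dot: "X j \<bullet> \<omega> = (\<Sum>i\<in>u. X j $ i * \<omega> $ i)" if "\<omega> \<in> I u" for j \<omega>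
    proof -
      have "X j \<bullet> \<omega> = (\<Sum>i\<in>UNIV. X j $ i * \<omega> $ i)" by (simp add: inner_vec_def)
      also have "\<dots> = (\<Sum>i\<in>u. X j $ i * \<omega> $ i)"
      proof (rule sum.mono_neutral_right)
        show "\<forall>i\<in>UNIV - u. X j $ i * \<omega> $ i = 0"
          using I_supp u_in that by auto
      qed auto
      finally show ?thesis .
    qed
    have "anova_mc g M X {} x0 = G {} x0" using part2 by blast
    also have "\<dots> = (1 / of_nat M) * (\<Sum>\<omega>\<in>I u. a \<omega> *
              (\<Sum>j=1..M. exp (\<i> * complex_of_real (X j \<bullet> \<omega>))))"
      unfolding G_def by (auto intro!: sum.cong arg_cong2[where f="(*)"] simp: dot)
    finally show ?thesis .
  qed
  show ?thesis using part1 part2 unfolding G_def by blast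
qed

end
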